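(* Let $\mathbf A=\bigoplus_{i\in I}\mathbf H_i$ be a BL-chain represented as an ordinal sum of totally ordered Wajsberg hoops, and let $\{a_x\}_{x\in X}$ be a family of elements of $A$. (1) If $\inf_x a_x$ and $\inf_x a_x^2$ exist and $(\inf_x a_x)^2=\inf_x a_x^2$, then $\{a_x\}_{x\in X}$ is $\wedge$-connected or $\inf_x a_x$ is idempotent. (2) If $\sup_x a_x$ exists, then $\{a_x\}_{x\in X}$ is $\vee$-connected or $\sup_x a_x$ is idempotent.
   Context: A BL-algebra is an algebra $(A,\cdot,\to,\wedge,\vee,0,1)$ such that $(A,\wedge,\vee,0,1)$ is a bounded lattice, $(A,\cdot,1)$ is a commutative monoid, $x\cdot y\le z$ iff $x\le y\to z$, $x\wedge y=x\cdot(x\to y)$ and $(x\to y)\vee(y\to x)=1$; a BL-chain is a totally ordered BL-algebra; $a^2=a\cdot a$, and $a$ is idempotent if $a^2=a$. A hoop is an algebra $(H,\cdot,\to,1)$ such that $(H,\cdot,1)$ is a commutative monoid and $x\to x=1$, $x\cdot(x\to y)=y\cdot(y\to x)$, $x\to(y\to z)=(x\cdot y)\to z$; a Wajsberg hoop additionally satisfies $(x\to y)\to y=(y\to x)\to x$. Given a totally ordered index set $I$ and hoops $\mathbf H_i$ with $H_i\cap H_j=\{1\}$ for $i\ne j$, the ordinal sum $\bigoplus_{i\in I}\mathbf H_i$ has universe $\bigcup_iH_i$ with: $x\to y=x\to^{\mathbf H_i}y$ if $x,y\in H_i$; $x\to y=y$ if $x\in H_i,y\in H_j,i>j$; $x\to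 y=1$ if $x\in H_i\setminus\{1\},y\in H_j,i<j$; $x\cdot y=x\cdot^{\mathbf H_i}y$ if $x,y\in H_i$; $x\cdot y=y$ if $x\in H_i,y\in H_j\setminus\{1\},i>j$; $x\cdot y=x$ if $x\in H_i\setminus\{1\},y\in H_j,i<j$. For $C\subseteq A$ with $\bigwedge C$ existing, $C$ is $\wedge$-connected if there are $i\in I$ and $c\in C$ with $\bigwedge C\in H_i$ and $c\in H_i$; dually, for $\bigvee C$ existing, $C$ is $\vee$-connected if there are $i\in I$ and $c\in C$ with $\bigvee C\in H_i$ and $c\in H_i$. *)

theory Defs
  imports Main
begin

definition bl_le :: "('a \<Rightarrow> 'a \<Rightarrow> 'a) \<Rightarrow> 'a \<Rightarrow> 'a \<Rightarrow> bool" where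
  "bl_le meet x y \<longleftrightarrow> meet x y = x"

definition BL_algebra ::
  "'a set \<Rightarrow> ('a \<Rightarrow> 'a \<Rightarrow> 'a) \<Rightarrow> ('a \<Rightarrow> 'a \<Rightarrow> 'a) \<Rightarrow> ('a \<Rightarrow> 'a \<Rightarrow> 'a)
    \<Rightarrow> ('a \<Rightarrow> 'a \<Rightarrow> 'a) \<Rightarrow> 'a \<Rightarrow> 'a \<Rightarrow> bool" where
  "BL_algebra A mult imp meet join zero one \<longleftrightarrow>
     zero \<in> A \<and> one \<in> A \<and>
     (\<forall>x\<in>A. \<forall>y\<in>A. mult x y \<in> A \<and> imp x y \<in> A \<and> meet x y \<in> A \<and> join x y \<in> A) \<and>
     \<comment> \<open>bounded lattice\<close>
     (\<forall>x\<in>A. \<forall>y\<in>A. \<forall>z\<in>A. meet (meet x y) z = meet x (meet y z) \<and> join (join x y) z = join x (join y z)) \<and>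
     (\<forall>x\<in>A. \<forall>y\<in>A. meet x y = meet y x \<and> join x y = join y x) \<and>
     (\<forall>x\<in>A. \<forall>y\<in>A. meet x (join x y) = x \<and> join x (meet x y) = x) \<and>
     (\<forall>x\<in>A. meet zero x = zero \<and> meet x one = x) \<and>
     \<comment> \<open>commutative monoid\<close>
     (\<forall>x\<in>A. \<forall>y\<in>A. \<forall>z\<in>A. mult (mult x y) z = mult x (mult y z)) \<and>
     (\<forall>x\<in>A. \<forall>y\<in>A. mult x y = mult y x) \<and>
     (\<forall>x\<in>A. mult x one = x) \<and>
     \<comment> \<open>residuation\<close>
     (\<forall>x\<in>A. \<forall>y\<in>A. \<forall>z\<in>A. bl_le meet (mult x y) z \<longleftrightarrow> bl_le meet x (imp y z)) \<and>
     \<comment> \<open>divisibility and prelinearity\<close>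
     (\<forall>x\<in>A. \<forall>y\<in>A. meet x y = mult x (imp x y)) \<and>
     (\<forall>x\<in>A. \<forall>y\<in>A. join (imp x y) (imp y x) = one)"

definition BL_chain ::
  "'a set \<Rightarrow> ('a \<Rightarrow> 'a \<Rightarrow> 'a) \<Rightarrow> ('a \<Rightarrow> 'a \<Rightarrow> 'a) \<Rightarrow> ('a \<Rightarrow> 'a \<Rightarrow> 'a)
    \<Rightarrow> ('a \<Rightarrow> 'a \<Rightarrow> 'a) \<Rightarrow> 'a \<Rightarrow> 'a \<Rightarrow> bool" where
  "BL_chain A mult imp meet join zero one \<longleftrightarrow>
     BL_algebra A mult imp meet join zero one \<and>
     (\<forall>x\<in>A. \<forall>y\<in>A. bl_le meet x y \<or> bl_le meet y x)"

definition hoop :: "'a set \<Rightarrow> ('a \<Rightarrow> 'a \<Rightarrow> 'a) \<Rightarrow> ('a \<Rightarrow> 'a \<Rightarrow> 'a) \<Rightarrow> 'a \<Rightarrow> bool" where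
  "hoop H mult imp one \<longleftrightarrow>
     one \<in> H \<and>
     (\<forall>x\<in>H. \<forall>y\<in>H. mult x y \<in> H \<and> imp x y \<in> H) \<and>
     (\<forall>x\<in>H. \<forall>y\<in>H. \<forall>z\<in>H. mult (mult x y) z = mult x (mult y z)) \<and>
     (\<forall>x\<in>H. \<forall>y\<in>H. mult x y = mult y x) \<and>
     (\<forall>x\<in>H. mult x one = x) \<and>
     (\<forall>x\<in>H. imp x x = one) \<and>
     (\<forall>x\<in>H. \<forall>y\<in>H. mult x (imp x y) = mult y (imp y x)) \<and>
     (\<forall>x\<in>H. \<forall>y\<in>H. \<forall>z\<in>H. imp x (imp y z) = imp (mult x y) z)"

definition wajsberg_hoop :: "'a set \<Rightarrow> ('a \<Rightarrow> 'a \<Rightarrow> 'a) \<Rightarrow> ('a \<Rightarrow> 'a \<Rightarrow> 'a) \<Rightarrow> 'a \<Rightarrow> bool" where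
  "wajsberg_hoop H mult imp one \<longleftrightarrow>
     hoop H mult imp one \<and>
     (\<forall>x\<in>H. \<forall>y\<in>H. imp (imp x y) y = imp (imp y x) x)"

text \<open>Hoop order: x \<le> y iff x \<rightarrow> y = 1; totally ordered means this order is total.\<close>
definition totally_ordered_wajsberg_hoop ::
  "'a set \<Rightarrow> ('a \<Rightarrow> 'a \<Rightarrow> 'a) \<Rightarrow> ('a \<Rightarrow> 'a \<Rightarrow> 'a) \<Rightarrow> 'a \<Rightarrow> bool" where
  "totally_ordered_wajsberg_hoop H mult imp one \<longleftrightarrow>
     wajsberg_hoop H mult imp one \<and>
     (\<forall>x\<in>H. \<forall>y\<in>H. imp x y = one \<or> imp y x = one)"

text \<open>The operations of each component H i are those of A restricted to H i.\<close>
definition ordinal_sum_rep ::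
  "'a set \<Rightarrow> ('a \<Rightarrow> 'a \<Rightarrow> 'a) \<Rightarrow> ('a \<Rightarrow> 'a \<Rightarrow> 'a) \<Rightarrow> 'a \<Rightarrow> ('i::linorder) set \<Rightarrow> ('i \<Rightarrow> 'a set) \<Rightarrow> bool" where
  "ordinal_sum_rep A mult imp one I H \<longleftrightarrow>
     A = (\<Union>i\<in>I. H i) \<and>
     (\<forall>i\<in>I. totally_ordered_wajsberg_hoop (H i) mult imp one) \<and>
     (\<forall>i\<in>I. \<forall>j\<in>I. i \<noteq> j \<longrightarrow> H i \<inter> H j = {one}) \<and>
     (\<forall>i\<in>I. \<forall>j\<in>I. \<forall>x\<in>H i. \<forall>y\<in>H j. i > j \<longrightarrow> imp x y = y) \<and>
     (\<forall>i\<in>I. \<forall>j\<in>I. \<forall>x\<in>H i. \<forall>y\<in>H j. i < j \<longrightarrow> x \<noteq> one \<longrightarrow> imp x y = one) \<and>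
     (\<forall>i\<in>I. \<forall>j\<in>I. \<forall>x\<in>H i. \<forall>y\<in>H j. i > j \<longrightarrow> y \<noteq> one \<longrightarrow> mult x y = y) \<and>
     (\<forall>i\<in>I. \<forall>j\<in>I. \<forall>x\<in>H i. \<forall>y\<in>H j. i < j \<longrightarrow> x \<noteq> one \<longrightarrow> mult x y = x)"

definition is_infimum :: "'a set \<Rightarrow> ('a \<Rightarrow> 'a \<Rightarrow> 'a) \<Rightarrow> 'a set \<Rightarrow> 'a \<Rightarrow> bool" where
  "is_infimum A meet S m \<longleftrightarrow> m \<in> A \<and> (\<forall>s\<in>S. bl_le meet m s) \<and>
     (\<forall>y\<in>A. (\<forall>s\<in>S. bl_le meet y s) \<longrightarrow> bl_le meet y m)"

definition is_supremum :: "'a set \<Rightarrow> ('a \<Rightarrow> 'a \<Rightarrow> 'a) \<Rightarrow> 'a set \<Rightarrow> 'a \<Rightarrow> bool" where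
  "is_supremum A meet S m \<longleftrightarrow> m \<in> A \<and> (\<forall>s\<in>S. bl_le meet s m) \<and>
     (\<forall>y\<in>A. (\<forall>s\<in>S. bl_le meet s y) \<longrightarrow> bl_le meet m y)"

definition meet_connected :: "'i set \<Rightarrow> ('i \<Rightarrow> 'a set) \<Rightarrow> 'a set \<Rightarrow> 'a \<Rightarrow> bool" where
  "meet_connected I H C m \<longleftrightarrow> (\<exists>i\<in>I. \<exists>c\<in>C. m \<in> H i \<and> c \<in> H i)"

definition join_connected :: "'i set \<Rightarrow> ('i \<Rightarrow> 'a set) \<Rightarrow> 'a set \<Rightarrow> 'a \<Rightarrow> bool" where
  "join_connected I H C s \<longleftrightarrow> (\<exists>i\<in>I. \<exists>c\<in>C. s \<in> H i \<and> c \<in> H i)"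

end

theory Submission
  imports Defs
begin

lemma BL_D:
  assumes "BL_algebra A mult imp meet join zero one"
  shows "zero \<in> A" "one \<in> A"
    "\<forall>x\<in>A. \<forall>y\<in>A. mult x y \<in> A \<and> imp x y \<in> A \<and> meet x y \<in> A \<and> join x y \<in> A"
    "\<forall>x\<in>A. \<forall>y\<in>A. meet x y = meet y x \<and> join x y = join y x"
    "\<forall>x\<in>A. \<forall>y\<in>A. meet x (join x y) = x \<and> join x (meet x y) = x"
    "\<forall>x\<in>A. meet zero x = zero \<and> meet x one = x"
    "\<forall>x\<in>A. \<forall>y\<in>A. mult x y = mult y x"
    "\<forall>x\<in>A. mult x one = x"
    "\<forall>x\<in>A. \<forall>y\<in>A. \<forall>z\<in>A. bl_le meet (mult x y) z \<longleftrightarrow> bl_le meet x (imp y z)"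
proof -
  note C = assms[unfolded BL_algebra_def]
  show "zero \<in> A" using C by (elim conjE)
  show "one \<in> A" using C by (elim conjE)
  show "\<forall>x\<in>A. \<forall>y\<in>A. mult x y \<in> A \<and> imp x y \<in> A \<and> meet x y \<in> A \<and> join x y \<in> A" using C by (elim conjE)
  show "\<forall>x\<in>A. \<forall>y\<in>A. meet x y = meet y x \<and> join x y = join y x" using C by (elim conjE)
  show "\<forall>x\<in>A. \<forall>y\<in>A. meet x (join x y) = x \<and> join x (meet x y) = x" using C by (elim conjE)
  show "\<forall>x\<in>A. meet zero x = zero \<and> meet x one = x" using C by (elim conjE)
  show "\<forall>x\<in>A. \<forall>y\<in>A. mult x y = mult y x" using C by (elim conjE)
  show "\<forall>x\<in>A. mult x one = x" using C by (elim conjE)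
  show "\<forall>x\<in>A. \<forall>y\<in>A. \<forall>z\<in>A. bl_le meet (mult x y) z \<longleftrightarrow> bl_le meet x (imp y z)" using C by (elim conjE)
qed

lemma bl_meet_idem:
  assumes BL: "BL_algebra A mult imp meet join zero one" and x: "x \<in> A"
  shows "meet x x = x"
proof -
  have abs: "\<forall>x\<in>A. \<forall>y\<in>A. meet x (join x y) = x \<and> join x (meet x y) = x"
    using BL_D[OF BL] by blast
  have cl: "meet x x \<in> A" using BL_D[OF BL] x by blast
  have "meet x (join x (meet x x)) = x" using abs x cl by blast
  moreover have "join x (meet x x) = x" using abs x by blast
  ultimately show ?thesis by simp
qed

lemma bl_le_one_iff:
  assumes BL: "BL_algebra A mult imp meet join zero one" and z: "z \<in> A"
  shows "bl_le meet one z \<longleftrightarrow> z = one"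
proof -
  have o: "one \<in> A" using BL_D[OF BL] by blast
  have "meet one z = meet z one" using BL_D[OF BL] o z by blast
  also have "\<dots> = z" using BL_D[OF BL] z by blast
  finally show ?thesis unfolding bl_le_def by auto
qed

lemma bl_le_imp:
  assumes BL: "BL_algebra A mult imp meet join zero one" and x: "x \<in> A" and y: "y \<in> A"
  shows "bl_le meet x y \<longleftrightarrow> imp x y = one"
proof -
  have o: "one \<in> A" using BL_D[OF BL] by blast
  have r: "bl_le meet (mult one x) y \<longleftrightarrow> bl_le meet one (imp x y)"
    using BL_D(9)[OF BL] o x y by blast
  have "mult one x = mult x one" using BL_D[OF BL] o x by blast
  also have "\<dots> = x" using BL_D[OF BL] x by blast
  finally have "mult one x = x" .
  moreover have "imp x y \<in> A" using BL_D[OF BL] x y by blast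
  ultimately show ?thesis using r bl_le_one_iff[OF BL] by simp
qed

lemma bl_antisym:
  assumes BL: "BL_algebra A mult imp meet join zero one" and x: "x \<in> A" and y: "y \<in> A"
    and "bl_le meet x y" "bl_le meet y x"
  shows "x = y"
proof -
  have "meet x y = meet y x" using BL_D[OF BL] x y by blast
  thus ?thesis using assms(4,5) unfolding bl_le_def by simp
qed

lemma bl_mult_le:
  assumes BL: "BL_algebra A mult imp meet join zero one" and x: "x \<in> A" and y: "y \<in> A"
  shows "bl_le meet (mult x y) y"
proof -
  have r: "bl_le meet (mult x y) y \<longleftrightarrow> bl_le meet x (imp y y)"
    using BL_D(9)[OF BL] x y by blast
  have "bl_le meet y y" using bl_meet_idem[OF BL y] by (simp add: bl_le_def)
  hence "imp y y = one" using bl_le_imp[OF BL y y] by simp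
  moreover have "bl_le meet x one" using BL_D[OF BL] x unfolding bl_le_def by blast
  ultimately show ?thesis using r by simp
qed

theorem mainTheorem11:
  fixes A :: "'a set" and mult imp meet join :: "'a \<Rightarrow> 'a \<Rightarrow> 'a" and zero one :: 'a
    and I :: "('i::linorder) set" and H :: "'i \<Rightarrow> 'a set"
    and X :: "'x set" and a :: "'x \<Rightarrow> 'a"
  assumes "BL_chain A mult imp meet join zero one"
    and "ordinal_sum_rep A mult imp one I H"
    and "a ` X \<subseteq> A"
  shows "(\<forall>m m2. is_infimum A meet (a ` X) m
             \<and> is_infimum A meet ((\<lambda>x. mult (a x) (a x)) ` X) m2
             \<and> mult m m = m2
           \<longrightarrow> meet_connected I H (a ` X) m \<or> mult m m = m)
       \<and> (\<forall>s. is_supremum A meet (a ` X) s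
           \<longrightarrow> join_connected I H (a ` X) s \<or> mult s s = s)"
proof -
  have BL: "BL_algebra A mult imp meet join zero one" using assms(1) by (simp add: BL_chain_def)
  have one: "one \<in> A" using BL_D[OF BL] by blast
  have mcl: "\<And>x y. x \<in> A \<Longrightarrow> y \<in> A \<Longrightarrow> mult x y \<in> A" using BL_D[OF BL] by blast
  have m11: "mult one one = one" using BL_D[OF BL] one by blast
  have Aeq: "A = (\<Union>i\<in>I. H i)" using assms(2) by (simp add: ordinal_sum_rep_def)
  have hp: "\<And>i. i \<in> I \<Longrightarrow> hoop (H i) mult imp one" using assms(2)
    by (simp add: ordinal_sum_rep_def totally_ordered_wajsberg_hoop_def wajsberg_hoop_def)
  have oneH: "\<And>i. i \<in> I \<Longrightarrow> one \<in> H i" using hp by (simp add: hoop_def)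
  have mH: "\<And>i x y. i \<in> I \<Longrightarrow> x \<in> H i \<Longrightarrow> y \<in> H i \<Longrightarrow> mult x y \<in> H i"
    using hp by (simp add: hoop_def)
  have implt: "\<And>i j x y. i \<in> I \<Longrightarrow> j \<in> I \<Longrightarrow> x \<in> H i \<Longrightarrow> y \<in> H j \<Longrightarrow> i < j \<Longrightarrow> x \<noteq> one \<Longrightarrow> imp x y = one"
    using assms(2) unfolding ordinal_sum_rep_def by blast
  have aA: "\<And>x. x \<in> X \<Longrightarrow> a x \<in> A" using assms(3) by blast
  have part1: "meet_connected I H (a ` X) m \<or> mult m m = m"
    if h: "is_infimum A meet (a ` X) m" "is_infimum A meet ((\<lambda>x. mult (a x) (a x)) ` X) m2"
      "mult m m = m2" for m m2
  proof (cases "m = one")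
    case True thus ?thesis using m11 by simp
  next
    case False
    have mA: "m \<in> A" using h(1) by (simp add: is_infimum_def)
    then obtain i where i: "i \<in> I" "m \<in> H i" using Aeq by blast
    show ?thesis
    proof (cases "meet_connected I H (a ` X) m")
      case True thus ?thesis by simp
    next
      case nc: False
      have lb: "\<forall>y\<in>(\<lambda>x. mult (a x) (a x)) ` X. bl_le meet m y"
      proof
        fix y assume "y \<in> (\<lambda>x. mult (a x) (a x)) ` X"
        then obtain x where x: "x \<in> X" "y = mult (a x) (a x)" by blast
        obtain j where j: "j \<in> I" "a x \<in> H j" using aA[OF x(1)] Aeq by blast
        have nH: "a x \<notin> H i" using nc i x(1) unfolding meet_connected_def by blast
        have le1: "bl_le meet m (a x)" using h(1) x(1) by (simp add: is_infimum_def)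
        have "\<not> j < i"
        proof
          assume "j < i"
          moreover have "a x \<noteq> one" using nH oneH[OF i(1)] by auto
          ultimately have "imp (a x) m = one" using implt[OF j(1) i(1) j(2) i(2)] by blast
          hence "bl_le meet (a x) m" using bl_le_imp[OF BL aA[OF x(1)] mA] by simp
          hence "a x = m" using bl_antisym[OF BL aA[OF x(1)] mA] le1 by simp
          thus False using nH i(2) by simp
        qed
        moreover have "j \<noteq> i" using nH j(2) by auto
        ultimately have "i < j" by simp
        have yH: "y \<in> H j" using mH[OF j(1) j(2) j(2)] x(2) by simp
        have "imp m y = one" using implt[OF i(1) j(1) i(2) yH \<open>i < j\<close> False] .
        moreover have "y \<in> A" using x(2) mcl aA[OF x(1)] by simp
        ultimately show "bl_le meet m y" using bl_le_imp[OF BL mA] by simp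
      qed
      have "bl_le meet m m2" using h(2) lb mA unfolding is_infimum_def by blast
      hence "bl_le meet m (mult m m)" using h(3) by simp
      moreover have "bl_le meet (mult m m) m" using bl_mult_le[OF BL mA mA] .
      ultimately have "mult m m = m" using bl_antisym[OF BL mcl[OF mA mA] mA] by simp
      thus ?thesis by simp
    qed
  qed
  have part2: "join_connected I H (a ` X) s \<or> mult s s = s"
    if h: "is_supremum A meet (a ` X) s" for s
  proof (cases "s = one")
    case True thus ?thesis using m11 by simp
  next
    case False
    have sA: "s \<in> A" using h(1) by (simp add: is_supremum_def)
    then obtain i where i: "i \<in> I" "s \<in> H i" using Aeq by blast
    have ssA: "mult s s \<in> A" using mcl[OF sA sA] .
    have ssH: "mult s s \<in> H i" using mH[OF i(1) i(2) i(2)] .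
    show ?thesis
    proof (cases "join_connected I H (a ` X) s")
      case True thus ?thesis by simp
    next
      case nc: False
      have ub: "\<forall>y\<in>a ` X. bl_le meet y (mult s s)"
      proof
        fix y assume "y \<in> a ` X"
        then obtain x where x: "x \<in> X" "y = a x" by blast
        obtain j where j: "j \<in> I" "a x \<in> H j" using aA[OF x(1)] Aeq by blast
        have nH: "a x \<notin> H i" using nc i x(1) unfolding join_connected_def by blast
        have ne: "a x \<noteq> one" using nH oneH[OF i(1)] by auto
        have le1: "bl_le meet (a x) s" using h(1) x(1) by (simp add: is_supremum_def)
        have "\<not> i < j"
        proof
          assume "i < j"
          hence "imp s (a x) = one" using implt[OF i(1) j(1) i(2) j(2)] False by blast
          hence "bl_le meet s (a x)" using bl_le_imp[OF BL sA aA[OF x(1)]] by simp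
          hence "a x = s" using bl_antisym[OF BL aA[OF x(1)] sA] le1 by simp
          thus False using nH i(2) by simp
        qed
        moreover have "j \<noteq> i" using nH j(2) by auto
        ultimately have "j < i" by simp
        have "imp (a x) (mult s s) = one" using implt[OF j(1) i(1) j(2) ssH \<open>j < i\<close> ne] .
        thus "bl_le meet y (mult s s)" using bl_le_imp[OF BL aA[OF x(1)] ssA] x(2) by simp
      qed
      have "bl_le meet s (mult s s)" using h ub ssA unfolding is_supremum_def by blast
      moreover have "bl_le meet (mult s s) s" using bl_mult_le[OF BL sA sA] .
      ultimately have "mult s s = s" using bl_antisym[OF BL ssA sA] by simp
      thus ?thesis by simp
    qed
  qed
  show ?thesis using part1 part2 by blast
qed

end
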